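(* Let $x$ be large, $B>0$, $z\in\mathbb C$ with $|z|\le B\log x/(\log_2x\log_3x)$, and $s\in\mathbb C$ with $\Re(s)>1/2$. Then \[\sum_{m=1}^\infty\frac{d_z(m)}{m}h_m(s)=\prod_p\Bigl(a_p(s)\bigl(1-\tfrac1p\bigr)^{-z}+b_p(s)\bigl(1+\tfrac1p\bigr)^{-z}+c_p(s)\Bigr),\] and both sides are analytic functions of $s$ in the half-plane $\Re(s)>1/2$.
   Context: $d_z$ is the multiplicative function with $d_z(p^\nu)=\Gamma(z+\nu)/(\Gamma(z)\nu!)$. For odd primes $p$: $a_p(s)=\frac{p-3}{2p}+\frac{2}{p(p^s+1)}$, $b_p(s)=\frac{p-1}{2p}$, $c_p(s)=1-a_p(s)-b_p(s)$; for $p=2$: $a_2(s)=\frac1{8^s+2^s+2}$, $b_2(s)=\frac12\frac{8^s-4^s+2}{8^s+2^s+2}$, $c_2(s)=\frac{2^{s-1}(4^s+2^s+2)}{8^s+2^s+2}$. Write $m=2^{e_1}p_2^{e_2}\cdots p_r^{e_r}$ ($e_1\ge0$, $p_j$ distinct odd primes, $e_j\ge1$), $m_0$ the squarefree part of $m/2^{e_1}$, $\omega(m_0)$ its number of prime factors, and \[h_m(s)=\frac{(-1)^{\omega(m_0)}}{m_0}\,\frac{\prod_{2\le j\le r,\ e_j\text{ even}}\bigl(1-\frac2{p_j}\bigr)\bigl(1+\frac{2(p_j-1)}{(p_j-2)(p_j^s-1)}\bigr)}{\prod_{p\mid m}\bigl(1+\frac2{p^s-1}\bigr)}\,\tilde\kappa(m,s),\]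 with $\tilde\kappa(m,s)=1$ if $m$ is odd and $\tilde\kappa(m,s)=\frac{(-1)^{e_1}}2\frac{8^s+4^s}{8^s+2^s+2}\bigl(1+\frac{2(1+(-1)^{e_1})}{4^s(2^s-1)}\bigr)$ if $m$ is even. *)

theory Defs
  imports "HOL-Analysis.Analysis" "HOL-Computational_Algebra.Primes"
begin

definition npow :: "nat \<Rightarrow> complex \<Rightarrow> complex" where
  "npow n s = (of_nat n :: complex) powr s"

text \<open>Generalised divisor function d_z; Gamma(z+nu)/(Gamma(z) nu!) is written as the
  rising factorial (z)_nu / nu!, its analytic continuation to all z.\<close>
definition dz :: "complex \<Rightarrow> nat \<Rightarrow> complex" where
  "dz z m = (\<Prod>p\<in>prime_factors m.
      pochhammer z (multiplicity p m) / fact (multiplicity p m))"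

definition ap :: "nat \<Rightarrow> complex \<Rightarrow> complex" where
  "ap p s = (if p = 2 then 1 / (npow 8 s + npow 2 s + 2)
     else (of_nat p - 3) / (2 * of_nat p) + 2 / (of_nat p * (npow p s + 1)))"

definition bp :: "nat \<Rightarrow> complex \<Rightarrow> complex" where
  "bp p s = (if p = 2 then (1/2) * (npow 8 s - npow 4 s + 2) / (npow 8 s + npow 2 s + 2)
     else (of_nat p - 1) / (2 * of_nat p))"

definition cp :: "nat \<Rightarrow> complex \<Rightarrow> complex" where
  "cp p s = (if p = 2 then (2::complex) powr (s - 1) * (npow 4 s + npow 2 s + 2)
                             / (npow 8 s + npow 2 s + 2)
     else 1 - ap p s - bp p s)"

definition oddexp_primes :: "nat \<Rightarrow> nat set" where
  "oddexp_primes m = {p \<in> prime_factors m. p \<noteq> 2 \<and> odd (multiplicity p m)}"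

definition evenexp_primes :: "nat \<Rightarrow> nat set" where
  "evenexp_primes m = {p \<in> prime_factors m. p \<noteq> 2 \<and> even (multiplicity p m)}"

definition m0 :: "nat \<Rightarrow> nat" where
  "m0 m = \<Prod>(oddexp_primes m)"

definition kappa :: "nat \<Rightarrow> complex \<Rightarrow> complex" where
  "kappa m s = (if odd m then 1 else
     (let e1 = multiplicity (2::nat) m in
       ((-1) ^ e1 / 2) * ((npow 8 s + npow 4 s) / (npow 8 s + npow 2 s + 2))
       * (1 + 2 * (1 + (-1) ^ e1) / (npow 4 s * (npow 2 s - 1)))))"

definition hm :: "nat \<Rightarrow> complex \<Rightarrow> complex" where
  "hm m s = ((-1) ^ card (oddexp_primes m) / of_nat (m0 m))
     * ((\<Prod>p\<in>evenexp_primes m. (1 - 2 / of_nat p)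
            * (1 + 2 * (of_nat p - 1) / ((of_nat p - 2) * (npow p s - 1))))
        / (\<Prod>p\<in>prime_factors m. 1 + 2 / (npow p s - 1)))
     * kappa m s"

definition euler_factor :: "complex \<Rightarrow> complex \<Rightarrow> nat \<Rightarrow> complex" where
  "euler_factor z s p = ap p s * (1 - 1 / of_nat p) powr (- z)
      + bp p s * (1 + 1 / of_nat p) powr (- z) + cp p s"

definition partial_euler :: "complex \<Rightarrow> complex \<Rightarrow> nat \<Rightarrow> complex" where
  "partial_euler z s N = (\<Prod>p\<in>{p. prime p \<and> p \<le> N}. euler_factor z s p)"

definition dirichlet_term :: "complex \<Rightarrow> complex \<Rightarrow> nat \<Rightarrow> complex" where
  "dirichlet_term z s m = dz z m / of_nat m * hm m s"

end

theory Submission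
  imports Defs "HOL-Complex_Analysis.Cauchy_Integral_Formula"
begin


definition mfun :: "(nat \<Rightarrow> nat \<Rightarrow> 'a::comm_monoid_mult) \<Rightarrow> nat \<Rightarrow> 'a" where
  "mfun L m = (\<Prod>p\<in>prime_factors m. L p (multiplicity p m))"

definition smooth :: "nat set \<Rightarrow> nat set" where
  "smooth P = {m. m > 0 \<and> prime_factors m \<subseteq> P}"

lemma pf_prime_power:
  assumes "prime (q::nat)" "e > 0"
  shows "prime_factors (q ^ e) = {q}"
  using assms
  by (auto simp: in_prime_factors_iff prime_dvd_power_iff primes_dvd_imp_eq prime_gt_0_nat)

lemma smooth_empty: "smooth {} = {1}"
proof -
  have "m = 1" if "m > 0" "prime_factors m = {}" for m :: nat
    using that prime_factorization_nat[of m] by simp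
  then show ?thesis by (auto simp: smooth_def)
qed

lemma mfun_one[simp]: "mfun L 1 = 1"
  by (simp add: mfun_def)

lemma mfun_mult_pow:
  assumes q: "prime (q::nat)" and m: "m > 0" and nd: "\<not> q dvd m" and L0: "L q 0 = 1"
  shows "mfun L (q ^ e * m) = L q e * mfun L m"
proof (cases "e = 0")
  case True then show ?thesis using L0 by simp
next
  case False
  have q0: "q ^ e \<noteq> 0" using q by (simp add: prime_gt_0_nat)
  have qn: "q \<notin> prime_factors m" using nd by (auto simp: in_prime_factors_iff)
  have pf: "prime_factors (q ^ e * m) = insert q (prime_factors m)"
    using prime_factors_product[OF q0, of m] m pf_prime_power[OF q] False by auto
  have mq: "multiplicity q (q ^ e * m) = e"
    using prime_elem_multiplicity_mult_distrib[of q "q^e" m] q m q0 nd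
    by (simp add: multiplicity_prime_power not_dvd_imp_multiplicity_0)
  have mp: "multiplicity p (q ^ e * m) = multiplicity p m" if "p \<in> prime_factors m" for p
  proof -
    have "prime p" "p \<noteq> q" using that qn by (auto simp: in_prime_factors_iff)
    then show ?thesis
      using prime_elem_multiplicity_mult_distrib[of p "q^e" m] q m q0
      by (simp add: multiplicity_distinct_prime_power)
  qed
  show ?thesis
    unfolding mfun_def pf using qn
    by (simp add: mq mp)
qed

lemma smooth_insert:
  assumes q: "prime (q::nat)" and qP: "q \<notin> P"
  shows "smooth (insert q P) = (\<lambda>(e,m). q ^ e * m) ` (UNIV \<times> smooth P)"
    and "inj_on (\<lambda>(e,m). q ^ e * m) (UNIV \<times> smooth P)"
proof -
  have q1: "q > 1" using q prime_gt_1_nat by blast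
  show "smooth (insert q P) = (\<lambda>(e,m). q ^ e * m) ` (UNIV \<times> smooth P)"
  proof (intro equalityI subsetI)
    fix m assume "m \<in> smooth (insert q P)"
    then have m: "m > 0" "prime_factors m \<subseteq> insert q P" by (auto simp: smooth_def)
    obtain y where y: "m = q ^ multiplicity q m * y" "\<not> q dvd y"
      using multiplicity_decompose'[of m q] m q1 by auto
    have y0: "y > 0" using y m by (metis gr0I mult_0_right)
    have "prime_factors y \<subseteq> prime_factors m" using y m
      by (intro dvd_prime_factors) (auto, metis dvd_triv_right)
    moreover have "q \<notin> prime_factors y" using y by (auto simp: in_prime_factors_iff)
    ultimately have "y \<in> smooth P" using m y0 by (auto simp: smooth_def)
    then show "m \<in> (\<lambda>(e,m). q ^ e * m) ` (UNIV \<times> smooth P)"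
      using y by (auto intro!: image_eqI[of _ _ "(multiplicity q m, y)"])
  next
    fix x assume "x \<in> (\<lambda>(e,m). q ^ e * m) ` (UNIV \<times> smooth P)"
    then obtain e y where x: "x = q ^ e * y" and y: "y \<in> smooth P" by auto
    have "q ^ e \<noteq> 0" using q1 by simp
    moreover have "y > 0" using y by (auto simp: smooth_def)
    ultimately show "x \<in> smooth (insert q P)"
      using prime_factors_product[of "q^e" y] y x q1 pf_prime_power[OF q, of e]
      by (cases "e = 0") (auto simp: smooth_def)
  qed
  show "inj_on (\<lambda>(e,m). q ^ e * m) (UNIV \<times> smooth P)"
  proof (rule inj_onI, clarify)
    fix e y e' y' assume y: "y \<in> smooth P" and y': "y' \<in> smooth P" and eq: "q ^ e * y = q ^ e' * y'"
    have nd: "\<not> q dvd y" "\<not> q dvd y'" using y y' qP q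
      by (auto simp: smooth_def in_prime_factors_iff)
    have "multiplicity q (q ^ e * y) = e" "multiplicity q (q ^ e' * y') = e'"
      using nd q1 by (auto intro: multiplicity_decomposeI)
    then have "e = e'" using eq by simp
    then show "e = e' \<and> y = y'" using eq q1 by simp
  qed
qed

lemma euler_product_finite:
  fixes L :: "nat \<Rightarrow> nat \<Rightarrow> 'a :: {real_normed_field, banach}"
  assumes fin: "finite P" and pr: "\<And>p. p \<in> P \<Longrightarrow> prime p"
    and L0: "\<And>p. p \<in> P \<Longrightarrow> L p 0 = 1"
    and Ls: "\<And>p. p \<in> P \<Longrightarrow> (L p has_sum S p) UNIV"
    and Lns: "\<And>p. p \<in> P \<Longrightarrow> (\<lambda>e. norm (L p e)) summable_on UNIV"
  shows "(\<lambda>m. norm (mfun L m)) summable_on smooth P \<and> (mfun L has_sum (\<Prod>p\<in>P. S p)) (smooth P)"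
  using fin pr L0 Ls Lns
proof (induction P rule: finite_induct)
  case empty
  have "(mfun L has_sum 1) {1}" by (rule has_sum_finiteI) (auto simp: mfun_def)
  then show ?case by (simp add: smooth_empty)
next
  case (insert q P)
  note IH = insert.IH[OF insert.prems(1-4)]
  have q: "prime q" using insert.prems by auto
  let ?h = "(\<lambda>(e,m). q ^ e * m)"
  note si = smooth_insert[OF q insert.hyps(2)]
  have nd: "\<not> q dvd m" if "m \<in> smooth P" for m
    using that insert.hyps(2) q by (auto simp: smooth_def in_prime_factors_iff)
  have comp: "mfun L (q ^ e * m) = L q e * mfun L m" if "m \<in> smooth P" for e m
    using mfun_mult_pow[OF q _ nd[OF that]] that insert.prems by (auto simp: smooth_def)
  define N where "N = infsum (\<lambda>m. norm (mfun L m)) (smooth P)"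
  have Nh: "((\<lambda>m. norm (mfun L m)) has_sum N) (smooth P)"
    using IH N_def by auto
  have s1: "(\<lambda>(e,m). norm (L q e) * norm (mfun L m)) summable_on (UNIV \<times> smooth P)"
  proof (rule summable_on_SigmaI[where g = "\<lambda>e. norm (L q e) * N"])
    show "((\<lambda>y. case (e, y) of (e, m) \<Rightarrow> norm (L q e) * norm (mfun L m)) has_sum norm (L q e) * N) (smooth P)" for e
      using has_sum_cmult_right[OF Nh, of "norm (L q e)"] by simp
    show "(\<lambda>e. norm (L q e) * N) summable_on UNIV"
      using summable_on_cmult_left[OF insert.prems(4)[of q]] by simp
  qed auto
  have s2: "(\<lambda>m. norm (mfun L m)) summable_on smooth (insert q P)"
    unfolding si(1) summable_on_reindex[OF si(2)]
  proof (rule summable_on_cong[THEN iffD1, OF _ s1])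
    show "(case x of (e, m) \<Rightarrow> norm (L q e) * norm (mfun L m)) = ((\<lambda>m. norm (mfun L m)) \<circ> ?h) x"
      if "x \<in> UNIV \<times> smooth P" for x
      using that by (auto simp: comp norm_mult)
  qed
  have s3: "(\<lambda>(e,m). L q e * mfun L m) summable_on (UNIV \<times> smooth P)"
    by (rule abs_summable_summable) (use s1 in \<open>simp add: case_prod_unfold norm_mult\<close>)
  have h3: "((\<lambda>(e,m). L q e * mfun L m) has_sum (S q * (\<Prod>p\<in>P. S p))) (UNIV \<times> smooth P)"
  proof (rule has_sum_SigmaI[where g = "\<lambda>e. L q e * (\<Prod>p\<in>P. S p)"])
    show "((\<lambda>y. case (e, y) of (e, m) \<Rightarrow> L q e * mfun L m) has_sum L q e * (\<Prod>p\<in>P. S p)) (smooth P)" for e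
      using has_sum_cmult_right[of "mfun L", OF conjunct2[OF IH], of "L q e"] by simp
    show "((\<lambda>e. L q e * (\<Prod>p\<in>P. S p)) has_sum S q * (\<Prod>p\<in>P. S p)) UNIV"
      by (rule has_sum_cmult_left) (use insert.prems in auto)
  qed (use s3 in auto)
  have h4: "(mfun L has_sum (\<Prod>p\<in>insert q P. S p)) (smooth (insert q P))"
    unfolding si(1) has_sum_reindex[OF si(2)] prod.insert[OF insert.hyps]
  proof (rule has_sum_cong[THEN iffD1, OF _ h3])
    show "(case x of (e, m) \<Rightarrow> L q e * mfun L m) = (mfun L \<circ> ?h) x"
      if "x \<in> UNIV \<times> smooth P" for x
      using that by (auto simp: comp)
  qed
  show ?case using s2 h4 by blast
qed



definition gK :: "real \<Rightarrow> (nat \<Rightarrow> real) \<Rightarrow> nat \<Rightarrow> nat \<Rightarrow> real" where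
  "gK K \<rho> p e = (if e = 0 then 1 else K * \<rho> e / (real p)^2)"

lemma mfun_nonneg: "(\<And>p e. g p e \<ge> (0::real)) \<Longrightarrow> mfun g m \<ge> 0"
  unfolding mfun_def by (intro prod_nonneg) auto

lemma smooth_upto: "{1..N} \<subseteq> smooth {p. prime p \<and> p \<le> N}"
  by (auto simp: smooth_def in_prime_factors_iff) (meson dvd_imp_le le_trans less_eq_Suc_le)

lemma gK_summable:
  assumes K: "K \<ge> 0" and rho: "\<And>e. \<rho> e \<ge> 0" "summable \<rho>"
  shows "summable (\<lambda>n. mfun (gK K \<rho>) (Suc n))"
proof -
  define R where "R = suminf \<rho>"
  have R0: "R \<ge> 0" unfolding R_def using rho by (simp add: suminf_nonneg)
  let ?g = "gK K \<rho>"
  have gnn: "?g p e \<ge> 0" for p e using K rho by (simp add: gK_def)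
  have gsum: "summable (?g p)" for p
  proof -
    have s: "summable (\<lambda>e. K / (real p)^2 * \<rho> e)" by (intro summable_mult rho)
    have ev: "\<forall>\<^sub>F e in sequentially. K / (real p)^2 * \<rho> e = ?g p e"
      using eventually_gt_at_top[of 0] by eventually_elim (simp add: gK_def)
    from summable_cong[OF ev] s show ?thesis by simp
  qed
  have gle: "suminf (?g p) \<le> 1 + K * R / (real p)^2" for p
  proof -
    have le: "?g p e \<le> (if e = 0 then 1 else 0) + K / (real p)^2 * \<rho> e" for e
      using K rho by (simp add: gK_def)
    have s1: "(\<lambda>e. (if e = 0 then 1 else 0) + K / (real p)^2 * \<rho> e) sums (1 + K / (real p)^2 * R)"
      by (intro sums_add sums_mult) (use sums_single[of 0 "\<lambda>_. 1::real"] rho R_def in \<open>auto simp: summable_sums\<close>)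
    have "suminf (?g p) \<le> 1 + K / (real p)^2 * R"
      using suminf_le[OF le gsum] s1 by (simp add: sums_iff)
    then show ?thesis by simp
  qed
  define Z where "Z = (\<Sum>n. inverse (real n ^ 2))"
  have Zs: "summable (\<lambda>n. inverse (real n ^ 2))" using inverse_power_summable[of 2] by simp
  show ?thesis
  proof (rule summableI_nonneg_bounded)
    show "0 \<le> mfun ?g (Suc n)" for n by (rule mfun_nonneg[OF gnn])
    fix N :: nat
    define P where "P = {p. prime p \<and> p \<le> N}"
    have finP: "finite P" unfolding P_def by auto
    have hs: "\<And>p. p \<in> P \<Longrightarrow> (?g p has_sum suminf (?g p)) UNIV"
      using gsum gnn by (intro sums_nonneg_imp_has_sum) (auto simp: summable_sums)
    have hns: "\<And>p. p \<in> P \<Longrightarrow> (\<lambda>e. norm (?g p e)) summable_on UNIV"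
      using gsum gnn by (intro summable_nonneg_imp_summable_on) auto
    have EP: "(mfun ?g has_sum (\<Prod>p\<in>P. suminf (?g p))) (smooth P)"
      using euler_product_finite[OF finP, of ?g "\<lambda>p. suminf (?g p)"] hs hns
      by (auto simp: P_def gK_def)
    have "(\<Sum>n<N. mfun ?g (Suc n)) = (\<Sum>m\<in>{1..N}. mfun ?g m)"
      by (rule sum.reindex_bij_witness[of _ "\<lambda>m. m - 1" Suc]) auto
    also have "\<dots> \<le> (\<Prod>p\<in>P. suminf (?g p))"
      using finite_sum_le_has_sum[OF EP, of "{1..N}"] smooth_upto[of N] mfun_nonneg[OF gnn]
      by (auto simp: P_def)
    also have "\<dots> \<le> (\<Prod>p\<in>P. 1 + K * R / (real p)^2)"
      by (intro prod_mono) (use gle gsum gnn in \<open>auto intro: suminf_nonneg\<close>)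
    also have "\<dots> \<le> exp (\<Sum>p\<in>P. K * R / (real p)^2)"
      by (rule prod_le_exp_sum) (use K R0 in auto)
    also have "\<dots> \<le> exp (K * R * Z)"
    proof -
      have "(\<Sum>p\<in>P. K * R / (real p)^2) = K * R * (\<Sum>p\<in>P. inverse (real p ^ 2))"
        by (simp add: sum_distrib_left field_simps)
      also have "(\<Sum>p\<in>P. inverse (real p ^ 2)) \<le> (\<Sum>n<Suc N. inverse (real n ^ 2))"
        by (rule sum_mono2) (auto simp: P_def)
      also have "\<dots> \<le> Z" unfolding Z_def by (rule sum_le_suminf[OF Zs]) auto
      finally show ?thesis using K R0 by (simp add: mult_left_mono)
    qed
    finally show "(\<Sum>n<N. mfun ?g (Suc n)) \<le> exp (K * R * Z)" .
  qed
qed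



lemma npow_exp: "n > 0 \<Longrightarrow> npow n s = exp (s * of_real (ln (real n)))"
  by (simp add: npow_def powr_def Ln_of_nat)

lemma npow_4: "npow 4 s = (npow 2 s)^2"
proof -
  have l: "ln (real 4) = 2 * ln (real 2)" using ln_realpow[of 2 2] by simp
  have "npow 4 s = exp (of_nat 2 * (s * of_real (ln (real 2))))"
    using l by (simp add: npow_exp mult_ac)
  also have "\<dots> = exp (s * of_real (ln (real 2)))^2" by (rule exp_of_nat_mult)
  also have "\<dots> = npow 2 s^2" by (simp add: npow_exp)
  finally show ?thesis .
qed

lemma npow_8: "npow 8 s = (npow 2 s)^3"
proof -
  have l: "ln (real 8) = 3 * ln (real 2)" using ln_realpow[of 2 3] by simp
  have "npow 8 s = exp (of_nat 3 * (s * of_real (ln (real 2))))"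
    using l by (simp add: npow_exp mult_ac)
  also have "\<dots> = exp (s * of_real (ln (real 2)))^3" by (rule exp_of_nat_mult)
  also have "\<dots> = npow 2 s^3" by (simp add: npow_exp)
  finally show ?thesis .
qed

lemma two_powr_sm1: "(2::complex) powr (s - 1) = npow 2 s / 2"
  by (simp add: npow_def powr_diff)

lemma norm_npow: "n > 0 \<Longrightarrow> cmod (npow n s) = real n powr Re s"
  unfolding npow_def by (subst norm_powr_real_powr) auto

lemma norm_npow_gt1:
  assumes "n \<ge> 2" "Re s > 1/2"
  shows "cmod (npow n s) > 1"
proof -
  have "real n powr Re s > real n powr 0"
    using assms by (intro powr_less_mono) auto
  then show ?thesis using assms by (simp add: norm_npow)
qed

lemma norm_npow_ge_sqrt:
  assumes "n \<ge> 2" "Re s > 1/2"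
  shows "cmod (npow n s) \<ge> sqrt (real n)"
proof -
  have "real n powr Re s \<ge> real n powr (1/2)"
    using assms by (intro powr_mono) auto
  then show ?thesis using assms by (simp add: norm_npow powr_half_sqrt)
qed

lemma npow_ne:
  assumes "n \<ge> 2" "Re s > 1/2"
  shows "npow n s \<noteq> 1" "npow n s \<noteq> -1" "npow n s \<noteq> 0"
  using norm_npow_gt1[OF assms] by auto

lemma quad_ne:
  fixes u :: complex
  assumes "cmod u > sqrt 2"
  shows "u^2 - u + 2 \<noteq> 0"
proof
  assume h: "u^2 - u + 2 = 0"
  obtain a b where u: "u = Complex a b" by (cases u)
  from h have re: "a^2 - b^2 - a + 2 = 0" and im: "2*a*b - b = 0"
    by (simp_all add: u complex_eq_iff power2_eq_square)
  have "b \<noteq> 0"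
  proof
    assume "b = 0"
    with re have "(a - 1/2)^2 + 7/4 = 0" by (simp add: power2_eq_square algebra_simps)
    moreover have "(a - 1/2)^2 \<ge> 0" by simp
    ultimately show False by linarith
  qed
  with im have "a = 1/2" by (simp add: algebra_simps)
  with re have "b^2 = 7/4" by (simp add: power2_eq_square algebra_simps)
  moreover have "(cmod u)^2 = a^2 + b^2" by (simp add: u cmod_power2)
  ultimately have "(cmod u)^2 = 2" using \<open>a = 1/2\<close> by (simp add: power2_eq_square)
  moreover have "(cmod u)^2 > (sqrt 2)^2"
    using assms by (intro power_strict_mono) auto
  ultimately show False by simp
qed

lemma N2_ne:
  assumes "Re s > 1/2"
  shows "npow 8 s + npow 2 s + 2 \<noteq> 0"
proof -
  define u where "u = npow 2 s"
  have "cmod u > 1" unfolding u_def by (rule norm_npow_gt1) (use assms in auto)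
  then have u1: "u + 1 \<noteq> 0" by (metis add.inverse_inverse add_eq_0_iff norm_minus_cancel norm_one order_less_irrefl)
  have "cmod u > sqrt 2"
  proof -
    have "real 2 powr Re s > real 2 powr (1/2)" using assms by (intro powr_less_mono) auto
    then show ?thesis unfolding u_def by (simp add: norm_npow powr_half_sqrt)
  qed
  then have "u^2 - u + 2 \<noteq> 0" by (rule quad_ne)
  then have "(u + 1) * (u^2 - u + 2) \<noteq> 0" using u1 by simp
  then show ?thesis by (simp add: npow_8 u_def[symmetric] algebra_simps power3_eq_cube power2_eq_square)
qed



definition Dp :: "nat \<Rightarrow> complex \<Rightarrow> complex" where
  "Dp p s = 1 + 2 / (npow p s - 1)"
definition Xp :: "nat \<Rightarrow> complex \<Rightarrow> complex" where
  "Xp p s = (1 - 2 / of_nat p) * (1 + 2 * (of_nat p - 1) / ((of_nat p - 2) * (npow p s - 1)))"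
definition kap :: "nat \<Rightarrow> complex \<Rightarrow> complex" where
  "kap e s = ((-1) ^ e / 2) * ((npow 8 s + npow 4 s) / (npow 8 s + npow 2 s + 2))
       * (1 + 2 * (1 + (-1) ^ e) / (npow 4 s * (npow 2 s - 1)))"

lemma alg2_even:
  fixes u :: complex assumes "u \<noteq> 1" "u \<noteq> -1" "u \<noteq> 0" "u^3 + u + 2 \<noteq> 0"
  shows "1 / (1 + 2 / (u - 1)) * ((1 / 2) * ((u^3 + u^2) / (u^3 + u + 2)) * (1 + 2 * (1 + 1) / (u^2 * (u - 1))))
     = 1 / (u^3 + u + 2) + (1/2) * (u^3 - u^2 + 2) / (u^3 + u + 2) * 1"
proof -
  have a: "u - 1 \<noteq> 0" "u + 1 \<noteq> 0" using assms by (auto simp: eq_neg_iff_add_eq_0[symmetric])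
  have b: "1 + 2 / (u - 1) = (u + 1) / (u - 1)" using a by (simp add: field_simps)
  define A where "A = u + 1"
  define B where "B = u - 1"
  define N where "N = u^3 + u + 2"
  have nz: "A \<noteq> 0" "B \<noteq> 0" "N \<noteq> 0" "u \<noteq> 0" using a assms by (auto simp: A_def B_def N_def)
  show ?thesis
    apply (unfold b)
    apply (unfold A_def[symmetric] B_def[symmetric] N_def[symmetric])
    using nz by (simp add: field_simps) (simp add: A_def B_def N_def algebra_simps power2_eq_square power3_eq_cube eval_nat_numeral)
qed

lemma alg2_odd:
  fixes u :: complex assumes "u \<noteq> 1" "u \<noteq> -1" "u \<noteq> 0" "u^3 + u + 2 \<noteq> 0"
  shows "1 / (1 + 2 / (u - 1)) * ((-1 / 2) * ((u^3 + u^2) / (u^3 + u + 2)) * (1 + 2 * (1 + -1) / (u^2 * (u - 1))))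
     = 1 / (u^3 + u + 2) + (1/2) * (u^3 - u^2 + 2) / (u^3 + u + 2) * -1"
proof -
  have a: "u - 1 \<noteq> 0" "u + 1 \<noteq> 0" using assms by (auto simp: eq_neg_iff_add_eq_0[symmetric])
  have b: "1 + 2 / (u - 1) = (u + 1) / (u - 1)" using a by (simp add: field_simps)
  define A where "A = u + 1"
  define B where "B = u - 1"
  define N where "N = u^3 + u + 2"
  have nz: "A \<noteq> 0" "B \<noteq> 0" "N \<noteq> 0" "u \<noteq> 0" using a assms by (auto simp: A_def B_def N_def)
  show ?thesis
    apply (unfold b)
    apply (unfold A_def[symmetric] B_def[symmetric] N_def[symmetric])
    using nz by (simp add: field_simps) (simp add: A_def B_def N_def algebra_simps power2_eq_square power3_eq_cube eval_nat_numeral)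
qed

lemma alg2_c:
  fixes u :: complex assumes "u^3 + u + 2 \<noteq> 0"
  shows "u / 2 * (u^2 + u + 2) / (u^3 + u + 2) = 1 - 1 / (u^3 + u + 2) - (1/2) * (u^3 - u^2 + 2) / (u^3 + u + 2)"
proof -
  define N where "N = u^3 + u + 2"
  have N: "N \<noteq> 0" using assms N_def by simp
  have "u / 2 * (u^2 + u + 2) / N = 1 - 1 / N - (1/2) * (u^3 - u^2 + 2) / N"
    using N by (simp add: field_simps) (simp add: N_def algebra_simps power2_eq_square power3_eq_cube)
  then show ?thesis by (simp add: N_def)
qed

lemma algp_odd:
  fixes w P :: complex assumes "w \<noteq> 1" "w \<noteq> -1" "P \<noteq> 0"
  shows "(-1 / P) * (1 / (1 + 2 / (w - 1))) * 1 = ((P - 3) / (2 * P) + 2 / (P * (w + 1))) + (P - 1) / (2 * P) * -1"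
proof -
  have a: "w - 1 \<noteq> 0" "w + 1 \<noteq> 0" using assms by (auto simp: eq_neg_iff_add_eq_0[symmetric])
  have b: "1 + 2 / (w - 1) = (w + 1) / (w - 1)" using a by (simp add: field_simps)
  define A where "A = w + 1"
  define B where "B = w - 1"
  have nz: "A \<noteq> 0" "B \<noteq> 0" using a by (auto simp: A_def B_def)
  show ?thesis
    apply (unfold b)
    apply (unfold A_def[symmetric] B_def[symmetric])
    using nz assms by (simp add: field_simps) (simp add: A_def B_def algebra_simps)
qed

lemma algp_even:
  fixes w P :: complex assumes "w \<noteq> 1" "w \<noteq> -1" "P \<noteq> 0" "P - 2 \<noteq> 0"
  shows "1 * (((1 - 2 / P) * (1 + 2 * (P - 1) / ((P - 2) * (w - 1)))) / (1 + 2 / (w - 1))) * 1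
     = ((P - 3) / (2 * P) + 2 / (P * (w + 1))) + (P - 1) / (2 * P) * 1"
proof -
  have a: "w - 1 \<noteq> 0" "w + 1 \<noteq> 0" using assms by (auto simp: eq_neg_iff_add_eq_0[symmetric])
  have b: "1 + 2 / (w - 1) = (w + 1) / (w - 1)" using a by (simp add: field_simps)
  define A where "A = w + 1"
  define B where "B = w - 1"
  have nz: "A \<noteq> 0" "B \<noteq> 0" using a by (auto simp: A_def B_def)
  show ?thesis
    apply (unfold b)
    apply (unfold A_def[symmetric] B_def[symmetric])
    using nz assms by (simp add: field_simps) (simp add: A_def B_def algebra_simps)
qed



lemma loc_alg:
  assumes p: "prime p" and e: "e > 0" and s: "Re s > 1/2"
  shows "(if p \<noteq> 2 \<and> odd e then -1 / of_nat p else 1) * ((if p \<noteq> 2 \<and> even e then Xp p s else 1) / Dp p s)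
          * (if p = 2 then kap e s else 1) = ap p s + bp p s * (-1)^e"
proof -
  have p2: "p \<ge> 2" using p prime_ge_2_nat by blast
  note ne = npow_ne[OF p2 s]
  show ?thesis
  proof (cases "p = 2")
    case True
    define u where "u = npow 2 s"
    have u: "u \<noteq> 1" "u \<noteq> -1" "u \<noteq> 0" using ne True by (auto simp: u_def)
    have N: "u^3 + u + 2 \<noteq> 0" using N2_ne[OF s] by (simp add: npow_8 u_def)
    show ?thesis
    proof (cases "even e")
      case True
      with \<open>p = 2\<close> show ?thesis using alg2_even[OF u N]
        by (simp add: Dp_def kap_def ap_def bp_def npow_8 npow_4 u_def[symmetric])
    next
      case False
      with \<open>p = 2\<close> show ?thesis using alg2_odd[OF u N]
        by (simp add: Dp_def kap_def ap_def bp_def npow_8 npow_4 u_def[symmetric])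
    qed
  next
    case False
    define w where "w = npow p s"
    have w: "w \<noteq> 1" "w \<noteq> -1" using ne by (auto simp: w_def)
    have P2: "(of_nat p :: complex) \<noteq> of_nat 2" using False by (simp only: of_nat_eq_iff) simp
    have P: "(of_nat p :: complex) \<noteq> 0" "(of_nat p :: complex) - 2 \<noteq> 0" using p2 P2 by auto
    show ?thesis
    proof (cases "even e")
      case True
      with False show ?thesis using algp_even[OF w P]
        by (simp add: Dp_def Xp_def ap_def bp_def w_def[symmetric])
    next
      case odd: False
      with False show ?thesis using algp_odd[OF w P(1)]
        by (simp add: Dp_def ap_def bp_def w_def[symmetric])
    qed
  qed
qed

lemma cp_alt: "Re s > 1/2 \<Longrightarrow> cp p s = 1 - ap p s - bp p s"
proof (cases "p = 2")
  case True
  assume s: "Re s > 1/2"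
  define u where "u = npow 2 s"
  have N: "u^3 + u + 2 \<noteq> 0" using N2_ne[OF s] by (simp add: npow_8 u_def)
  show ?thesis using True alg2_c[OF N]
    by (simp add: cp_def ap_def bp_def npow_8 npow_4 two_powr_sm1 u_def[symmetric])
qed (simp add: cp_def)



lemma prod_subset_if: "finite A \<Longrightarrow> B \<subseteq> A \<Longrightarrow> prod f B = (\<Prod>x\<in>A. if x \<in> B then f x else 1)"
  by (metis prod.inter_restrict Int_absorb1)

lemma hm_prod:
  assumes m: "m > 0" and s: "Re s > 1/2"
  shows "hm m s = (\<Prod>p\<in>prime_factors m. ap p s + bp p s * (-1)^multiplicity p m)"
proof -
  let ?PF = "prime_factors m"
  let ?O = "oddexp_primes m"
  let ?E = "evenexp_primes m"
  have OP: "?O \<subseteq> ?PF" and EP: "?E \<subseteq> ?PF" by (auto simp: oddexp_primes_def evenexp_primes_def)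
  have h1: "(-1)^card ?O / of_nat (m0 m) = (\<Prod>p\<in>?PF. if p \<in> ?O then -1 / of_nat p else (1::complex))"
  proof -
    have "(\<Prod>p\<in>?PF. if p \<in> ?O then -1 / of_nat p else (1::complex)) = (\<Prod>p\<in>?O. -1 / of_nat p)"
      by (rule prod_subset_if[symmetric]) (use OP in auto)
    also have "\<dots> = (\<Prod>p\<in>?O. (-1::complex)) / (\<Prod>p\<in>?O. of_nat p)"
      by (rule prod_dividef)
    also have "\<dots> = (-1)^card ?O / of_nat (m0 m)"
      by (simp only: prod_constant m0_def of_nat_prod)
    finally show ?thesis by simp
  qed
  have h2: "(\<Prod>p\<in>?E. Xp p s) = (\<Prod>p\<in>?PF. if p \<in> ?E then Xp p s else 1)"
    by (rule prod_subset_if) (use EP in auto)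
  have h4: "kappa m s = (\<Prod>p\<in>?PF. if p = 2 then kap (multiplicity p m) s else 1)"
  proof (cases "even m")
    case True
    then have "2 \<in> ?PF" using m by (auto simp: in_prime_factors_iff)
    then have "(\<Prod>p\<in>?PF. if p = 2 then kap (multiplicity p m) s else 1) = (\<Prod>p\<in>{2}. kap (multiplicity p m) s)"
      using prod_subset_if[of ?PF "{2}" "\<lambda>p. kap (multiplicity p m) s"] by simp
    then show ?thesis using True by (simp add: kappa_def kap_def Let_def)
  next
    case False
    then have "2 \<notin> ?PF" by (auto simp: in_prime_factors_iff)
    then have "(\<Prod>p\<in>?PF. if p = 2 then kap (multiplicity p m) s else 1) = 1"
      by (intro prod.neutral) auto
    then show ?thesis using False by (simp add: kappa_def)
  qed
  have "hm m s = ((-1)^card ?O / of_nat (m0 m)) * ((\<Prod>p\<in>?E. Xp p s) / (\<Prod>p\<in>?PF. Dp p s)) * kappa m s"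
    by (simp add: hm_def Xp_def Dp_def)
  also have "\<dots> = (\<Prod>p\<in>?PF. (if p \<in> ?O then -1 / of_nat p else 1) * ((if p \<in> ?E then Xp p s else 1) / Dp p s)
        * (if p = 2 then kap (multiplicity p m) s else 1))"
    unfolding h1 h2 h4 prod_dividef[symmetric] prod.distrib by simp
  also have "\<dots> = (\<Prod>p\<in>?PF. ap p s + bp p s * (-1)^multiplicity p m)"
  proof (rule prod.cong[OF refl])
    fix p assume pp: "p \<in> ?PF"
    have pr: "prime p" and e: "multiplicity p m > 0" using pp m
      by (auto simp: prime_factors_multiplicity)
    have "p \<in> ?O \<longleftrightarrow> p \<noteq> 2 \<and> odd (multiplicity p m)" "p \<in> ?E \<longleftrightarrow> p \<noteq> 2 \<and> even (multiplicity p m)"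
      using pp by (auto simp: oddexp_primes_def evenexp_primes_def)
    then show "(if p \<in> ?O then -1 / of_nat p else 1) * ((if p \<in> ?E then Xp p s else 1) / Dp p s)
        * (if p = 2 then kap (multiplicity p m) s else 1) = ap p s + bp p s * (-1)^multiplicity p m"
      using loc_alg[OF pr e s] by simp
  qed
  finally show ?thesis .
qed

definition Lz :: "complex \<Rightarrow> complex \<Rightarrow> nat \<Rightarrow> nat \<Rightarrow> complex" where
  "Lz z s p e = (if e = 0 then 1 else pochhammer z e / fact e / of_nat p ^ e * (ap p s + bp p s * (-1)^e))"

lemma dt_mfun:
  assumes m: "m > 0" and s: "Re s > 1/2"
  shows "dirichlet_term z s m = mfun (Lz z s) m"
proof -
  have m': "m = (\<Prod>p\<in>prime_factors m. p ^ multiplicity p m)" by (rule prime_factorization_nat[OF m])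
  have om: "(of_nat m :: complex) = (\<Prod>p\<in>prime_factors m. of_nat p ^ multiplicity p m)"
    by (subst m') (simp only: of_nat_prod of_nat_power)
  have "dirichlet_term z s m = (\<Prod>p\<in>prime_factors m. pochhammer z (multiplicity p m) / fact (multiplicity p m))
      / (\<Prod>p\<in>prime_factors m. of_nat p ^ multiplicity p m) * (\<Prod>p\<in>prime_factors m. ap p s + bp p s * (-1)^multiplicity p m)"
    unfolding dirichlet_term_def dz_def hm_prod[OF m s] om ..
  also have "\<dots> = (\<Prod>p\<in>prime_factors m. pochhammer z (multiplicity p m) / fact (multiplicity p m)
      / of_nat p ^ multiplicity p m * (ap p s + bp p s * (-1)^multiplicity p m))"
    by (simp only: prod_dividef prod.distrib)
  also have "\<dots> = mfun (Lz z s) m"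
    unfolding mfun_def Lz_def
    by (rule prod.cong[OF refl]) (use m in \<open>auto simp: prime_factors_multiplicity\<close>)
  finally show ?thesis .
qed



lemma binom_series:
  fixes x :: complex assumes "norm x < 1"
  shows "(\<lambda>e. pochhammer z e / fact e * x ^ e) sums (1 - x) powr (-z)"
proof -
  have "(\<lambda>e. ((-z) gchoose e) * (-x) ^ e) sums (1 + (-x)) powr (-z)"
    by (rule gen_binomial_complex) (use assms in simp)
  moreover have "((-z) gchoose e) * (-x) ^ e = pochhammer z e / fact e * x ^ e" for e
  proof -
    have "((-z) gchoose e) * (-x) ^ e = ((-1)^e * (-1)^e) * (pochhammer z e / fact e * x ^ e)"
      by (simp add: gbinomial_pochhammer power_minus[of x] mult_ac)
    also have "(-1::complex)^e * (-1)^e = 1" by (simp add: power_mult_distrib[symmetric])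
    finally show ?thesis by simp
  qed
  ultimately show ?thesis by simp
qed

lemma Lz_sums:
  assumes p: "prime p" and s: "Re s > 1/2"
  shows "Lz z s p sums euler_factor z s p"
proof -
  have p2: "real p \<ge> 2" using p prime_ge_2_nat by auto
  let ?t = "\<lambda>e. pochhammer z e / fact e / of_nat p ^ e"
  have n1: "norm (1 / of_nat p :: complex) < 1" "norm (-1 / of_nat p :: complex) < 1"
    using p2 by (simp_all add: norm_divide)
  have A: "?t sums (1 - 1 / of_nat p) powr (-z)"
    using binom_series[OF n1(1), of z] by (simp add: power_divide)
  have B: "(\<lambda>e. ?t e * (-1)^e) sums (1 + 1 / of_nat p) powr (-z)"
    using binom_series[OF n1(2), of z, unfolded power_divide] by (simp add: mult_ac)
  have C: "(\<lambda>e. if e = 0 then 1 - ap p s - bp p s else 0) sums (1 - ap p s - bp p s)"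
    using sums_single[of 0 "\<lambda>_. 1 - ap p s - bp p s"] by simp
  have "(\<lambda>e. ap p s * ?t e + bp p s * (?t e * (-1)^e) + (if e = 0 then 1 - ap p s - bp p s else 0)) sums
          (ap p s * (1 - 1 / of_nat p) powr (-z) + bp p s * (1 + 1 / of_nat p) powr (-z) + (1 - ap p s - bp p s))"
    by (intro sums_add sums_mult A B C)
  moreover have "ap p s * ?t e + bp p s * (?t e * (-1)^e) + (if e = 0 then 1 - ap p s - bp p s else 0) = Lz z s p e" for e
    by (cases "e = 0") (simp_all add: Lz_def algebra_simps)
  ultimately show ?thesis by (simp add: euler_factor_def cp_alt[OF s])
qed


lemma tail_conv:
  fixes f :: "nat \<Rightarrow> complex" and T :: "nat \<Rightarrow> nat set"
  assumes sn: "summable (\<lambda>n. norm (f (Suc n)))"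
    and sub: "\<And>N. {1..N} \<subseteq> T N" "\<And>N. T N \<subseteq> {0<..}"
    and hs: "\<And>N. (f has_sum v N) (T N)"
  shows "v \<longlonglongrightarrow> (\<Sum>n. f (Suc n))"
proof -
  define A :: "nat set" where "A = {0<..}"
  have A: "A = Suc ` UNIV" unfolding A_def by (auto simp: image_iff) (metis Suc_pred)
  define L where "L = (\<Sum>n. f (Suc n))"
  define Tn where "Tn = (\<Sum>n. norm (f (Suc n)))"
  have hA: "(f has_sum L) A"
  proof -
    have "((\<lambda>n. f (Suc n)) has_sum L) UNIV"
      by (rule norm_summable_imp_has_sum[OF sn]) (use summable_norm_cancel[OF sn] in \<open>simp add: L_def summable_sums\<close>)
    then show ?thesis unfolding A by (subst has_sum_reindex) (auto simp: o_def)
  qed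
  have hnA: "((\<lambda>m. norm (f m)) has_sum Tn) A"
  proof -
    have "((\<lambda>n. norm (f (Suc n))) has_sum Tn) UNIV"
      by (rule sums_nonneg_imp_has_sum) (use sn in \<open>auto simp: Tn_def summable_sums\<close>)
    then show ?thesis unfolding A by (subst has_sum_reindex) (auto simp: o_def)
  qed
  have absA: "(\<lambda>m. norm (f m)) summable_on A" using hnA by (auto simp: summable_on_def)
  have bound: "norm (v N - L) \<le> Tn - (\<Sum>n<N. norm (f (Suc n)))" for N
  proof -
    have TA: "T N \<subseteq> A" using sub(2) A_def by auto
    have s1: "f summable_on (A - T N)"
      by (rule summable_on_subset_banach[OF abs_summable_summable[OF absA]]) auto
    have "(f has_sum (v N + infsum f (A - T N))) (T N \<union> (A - T N))"
      by (rule has_sum_Un_disjoint[OF hs]) (use s1 in auto)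
    moreover have "T N \<union> (A - T N) = A" using TA by auto
    ultimately have "v N + infsum f (A - T N) = L" using hA has_sum_unique by metis
    then have "norm (v N - L) = norm (infsum f (A - T N))" by (metis add_diff_cancel_left' norm_minus_commute)
    also have "\<dots> \<le> infsum (\<lambda>m. norm (f m)) (A - T N)"
      by (rule norm_infsum_bound) (rule summable_on_subset_banach[OF absA], auto)
    also have "\<dots> \<le> infsum (\<lambda>m. norm (f m)) (A - {1..N})"
      by (rule infsum_mono_neutral) (use sub(1)[of N] in \<open>auto intro!: summable_on_subset_banach[OF absA]\<close>)
    also have "\<dots> = Tn - (\<Sum>m\<in>{1..N}. norm (f m))"
    proof -
      have sA: "(\<lambda>m. norm (f m)) summable_on (A - {1..N})"
        by (rule summable_on_subset_banach[OF absA]) auto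
      have "infsum (\<lambda>m. norm (f m)) ({1..N} \<union> (A - {1..N})) = (\<Sum>m\<in>{1..N}. norm (f m)) + infsum (\<lambda>m. norm (f m)) (A - {1..N})"
        by (subst infsum_Un_disjoint) (use sA in auto)
      moreover have "{1..N} \<union> (A - {1..N}) = A" by (auto simp: A_def)
      ultimately show ?thesis using hnA infsumI by fastforce
    qed
    also have "(\<Sum>m\<in>{1..N}. norm (f m)) = (\<Sum>n<N. norm (f (Suc n)))"
      by (rule sum.reindex_bij_witness[of _ Suc "\<lambda>m. m - 1"]) auto
    finally show ?thesis .
  qed
  have "(\<lambda>N. Tn - (\<Sum>n<N. norm (f (Suc n)))) \<longlonglongrightarrow> Tn - Tn"
    by (intro tendsto_intros) (use summable_LIMSEQ[OF sn] in \<open>simp add: Tn_def\<close>)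
  then have "(\<lambda>N. v N - L) \<longlonglongrightarrow> 0"
    by (intro Lim_null_comparison[OF always_eventually[OF allI[OF bound]]]) simp
  then show ?thesis unfolding L_def[symmetric] by (rule LIM_zero_cancel)
qed



lemma poch_nonneg: "(x::real) \<ge> 0 \<Longrightarrow> pochhammer x n \<ge> 0"
  by (induction n) (auto simp: pochhammer_Suc)

lemma norm_poch_le: "cmod (pochhammer z e) \<le> pochhammer (cmod z) e"
proof (induction e)
  case 0 then show ?case by simp
next
  case (Suc e)
  have "cmod (pochhammer z (Suc e)) = cmod (pochhammer z e) * cmod (z + of_nat e)"
    by (simp add: pochhammer_Suc norm_mult)
  also have "\<dots> \<le> pochhammer (cmod z) e * (cmod z + of_nat e)"
  proof (rule mult_mono[OF Suc.IH])
    show "cmod (z + of_nat e) \<le> cmod z + of_nat e"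
      using norm_triangle_ineq[of z "of_nat e"] by simp
  qed (auto intro: poch_nonneg)
  also have "\<dots> = pochhammer (cmod z) (Suc e)" by (simp add: pochhammer_Suc)
  finally show ?case .
qed

definition rho :: "complex \<Rightarrow> nat \<Rightarrow> real" where
  "rho z e = pochhammer (cmod z) e / fact e / 2 ^ e"

lemma rho_nonneg: "rho z e \<ge> 0"
  unfolding rho_def by (intro divide_nonneg_nonneg poch_nonneg) auto

lemma rho_summable: "summable (rho z)"
proof -
  have S: "(\<lambda>e. ((-cmod z) gchoose e) * ((-1) ^ e / 2 ^ e)) sums (1 + (-1/2)) powr (-cmod z)"
    using gen_binomial_real[of "-1/2" "-cmod z"] unfolding power_divide by simp
  moreover have "((-cmod z) gchoose e) * ((-1) ^ e / 2 ^ e) = rho z e" for e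
  proof -
    have "((-cmod z) gchoose e) * ((-1) ^ e / 2 ^ e) = ((-1)^e * (-1)^e) * (pochhammer (cmod z) e / fact e / 2 ^ e)"
      by (simp add: gbinomial_pochhammer)
    also have "(-1::real)^e * (-1)^e = 1" by (simp add: power_mult_distrib[symmetric])
    finally show ?thesis by (simp add: rho_def)
  qed
  ultimately show ?thesis by (simp add: sums_iff)
qed

lemma Lz_bound:
  assumes p: "prime p" and e: "e > 0" and C: "C \<ge> 0"
    and C1: "cmod (ap p y) + cmod (bp p y) \<le> C" and C2: "cmod (ap p y - bp p y) \<le> C / real p"
  shows "cmod (Lz z y p e) \<le> gK (4 * C) (rho z) p e"
proof -
  have p2: "real p \<ge> 2" using p prime_ge_2_nat by auto
  define r where "r = pochhammer (cmod z) e / fact e"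
  have r0: "r \<ge> 0" unfolding r_def by (intro divide_nonneg_nonneg poch_nonneg) auto
  define H where "H = (if e = 1 then C / real p else C)"
  have H0: "H \<ge> 0" using C p2 by (simp add: H_def)
  have Hb: "cmod (ap p y + bp p y * (-1)^e) \<le> H"
  proof (cases "e = 1")
    case True then show ?thesis using C2 by (simp add: H_def)
  next
    case False
    have "cmod (ap p y + bp p y * (-1)^e) \<le> cmod (ap p y) + cmod (bp p y * (-1)^e)"
      by (rule norm_triangle_ineq)
    also have "\<dots> = cmod (ap p y) + cmod (bp p y)" by (simp add: norm_mult norm_power)
    finally show ?thesis using C1 False by (simp add: H_def)
  qed
  have "cmod (Lz z y p e) = cmod (pochhammer z e) / fact e / real p ^ e * cmod (ap p y + bp p y * (-1)^e)"
    using e by (simp add: Lz_def norm_mult norm_divide norm_power)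
  also have "\<dots> \<le> r / real p ^ e * H"
    unfolding r_def
    by (intro mult_mono divide_right_mono norm_poch_le Hb) (auto intro!: divide_nonneg_nonneg poch_nonneg)
  also have "\<dots> \<le> 4 * C * (r / 2 ^ e) / (real p)^2"
  proof (cases "e = 1")
    case True
    have "r / real p * (C / real p) = C * r / (real p)^2" by (simp add: power2_eq_square)
    also have "\<dots> \<le> 4 * C * (r / 2) / (real p)^2" using C r0 by (intro divide_right_mono) auto
    finally show ?thesis using True by (simp add: H_def)
  next
    case False
    define k where "k = e - 2"
    have k: "e = k + 2" using e False by (simp add: k_def)
    have pk: "(2::real) ^ k \<le> real p ^ k" using p2 by (intro power_mono) auto
    have "r / real p ^ e * C = (C * r) / (real p ^ k * (real p)^2)" by (simp add: k power_add power2_eq_square mult_ac)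
    also have "\<dots> \<le> (C * r) / (2 ^ k * (real p)^2)"
      using C r0 p2 pk by (intro divide_left_mono mult_right_mono mult_pos_pos) auto
    also have "\<dots> = 4 * C * (r / 2 ^ e) / (real p)^2" by (simp add: k power_add)
    finally show ?thesis using False by (simp add: H_def)
  qed
  also have "\<dots> = gK (4 * C) (rho z) p e"
    using e by (simp add: gK_def rho_def r_def)
  finally show ?thesis .
qed



definition HP :: "complex set" where "HP = {s. Re s > 1/2}"

lemma open_HP: "open HP" unfolding HP_def by (rule open_halfspace_Re_gt)

lemma npow_holo: "(\<lambda>y. npow n y) holomorphic_on A"
  unfolding npow_def by (intro holomorphic_on_powr_right holomorphic_intros)

lemma N2': "Re y > 1/2 \<Longrightarrow> 2 * npow 8 y + 2 * npow 2 y + 4 \<noteq> 0"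
          "Re y > 1/2 \<Longrightarrow> npow 8 y + npow 2 y + 2 \<noteq> 0"
proof -
  assume "Re y > 1/2"
  then have h: "npow 8 y + npow 2 y + 2 \<noteq> 0" by (rule N2_ne)
  then show "npow 8 y + npow 2 y + 2 \<noteq> 0" .
  have eq: "2 * npow 8 y + 2 * npow 2 y + 4 = 2 * (npow 8 y + npow 2 y + 2)" by simp
  show "2 * npow 8 y + 2 * npow 2 y + 4 \<noteq> 0" by (metis h eq mult_eq_0_iff zero_neq_numeral)
qed

lemma ap_holo:
  assumes "p \<ge> 2"
  shows "(\<lambda>y. ap p y) holomorphic_on HP"
proof (cases "p = 2")
  case True
  show ?thesis unfolding ap_def using True
    by (simp, intro holomorphic_intros npow_holo) (use N2' in \<open>auto simp: HP_def\<close>)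
next
  case False
  have "of_nat p * (npow p y + 1) \<noteq> 0" if "y \<in> HP" for y
  proof -
    have "npow p y \<noteq> -1" using npow_ne[OF assms, of y] that by (auto simp: HP_def)
    then have "npow p y + 1 \<noteq> 0" by (simp add: eq_neg_iff_add_eq_0)
    then show ?thesis using assms by simp
  qed
  then show ?thesis unfolding ap_def using False
    by (simp, intro holomorphic_intros npow_holo) auto
qed

lemma bp_holo:
  assumes "p \<ge> 2"
  shows "(\<lambda>y. bp p y) holomorphic_on HP"
proof (cases "p = 2")
  case True
  show ?thesis unfolding bp_def using True
    by (simp, intro holomorphic_intros npow_holo) (use N2' in \<open>auto simp: HP_def\<close>)
next
  case False
  then show ?thesis unfolding bp_def by simp
qed

lemma odd_bounds:
  assumes p: "prime p" "p \<noteq> 2" and y: "Re y > 1/2"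
  shows "cmod (ap p y) + cmod (bp p y) \<le> 5" "cmod (ap p y - bp p y) \<le> 5 / real p"
proof -
  have p2: "p \<ge> 2" using p prime_ge_2_nat by blast
  have p3: "p \<ge> 3" using p2 p(2) by linarith
  define P where "P = real p"
  have P3: "P \<ge> 3" using p3 by (simp add: P_def)
  define w where "w = npow p y"
  have "cmod w \<ge> sqrt (real p)" unfolding w_def by (rule norm_npow_ge_sqrt[OF p2 y])
  moreover have "sqrt (real p) \<ge> sqrt (9/4)" using p3 by (subst real_sqrt_le_iff) auto
  moreover have "sqrt (9/4) = (3/2 :: real)" by (simp add: real_sqrt_divide)
  ultimately have w32: "cmod w \<ge> 3/2" by linarith
  have wp1: "cmod (w + 1) \<ge> 1/2" using norm_diff_ineq[of w 1] w32 by simp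
  have t: "cmod (2 / (of_nat p * (w + 1))) \<le> 4 / P"
  proof -
    have "cmod (2 / (of_nat p * (w + 1))) = 2 / (P * cmod (w + 1))"
      by (simp add: norm_divide norm_mult P_def)
    also have "\<dots> \<le> 2 / (P * (1/2))"
      using P3 wp1 by (intro divide_left_mono mult_left_mono mult_pos_pos) auto
    finally show ?thesis by simp
  qed
  have e1: "(of_nat p - 3) / (2 * of_nat p) = (of_real ((P - 3) / (2 * P)) :: complex)" by (simp add: P_def)
  have e2: "(of_nat p - 1) / (2 * of_nat p) = (of_real ((P - 1) / (2 * P)) :: complex)" by (simp add: P_def)
  have a1: "\<bar>(P - 3) / (2 * P)\<bar> \<le> 1/2" using P3 by (simp add: abs_if field_simps)
  have a2: "\<bar>(P - 1) / (2 * P)\<bar> \<le> 1/2" using P3 by (simp add: abs_if field_simps)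
  have ap: "ap p y = of_real ((P - 3) / (2 * P)) + 2 / (of_nat p * (w + 1))"
    using p(2) by (simp add: ap_def w_def e1)
  have bp: "bp p y = of_real ((P - 1) / (2 * P))"
    using p(2) by (simp add: bp_def e2)
  have n1: "cmod (of_real ((P - 3) / (2 * P)) :: complex) \<le> 1/2" using a1 by (simp only: norm_of_real)
  have n2: "cmod (of_real ((P - 1) / (2 * P)) :: complex) \<le> 1/2" using a2 by (simp only: norm_of_real)
  have n3: "cmod (of_real (-1 / P) :: complex) = 1 / P" using P3 by (simp only: norm_of_real) simp
  have "cmod (ap p y) \<le> cmod (of_real ((P - 3) / (2 * P)) :: complex) + cmod (2 / (of_nat p * (w + 1)))"
    unfolding ap by (rule norm_triangle_ineq)
  moreover have "4 / P \<le> 4 / 3" using P3 by (intro divide_left_mono) auto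
  moreover have "cmod (bp p y) \<le> 1/2" unfolding bp using n2 .
  ultimately show "cmod (ap p y) + cmod (bp p y) \<le> 5" using n1 t by linarith
  have "ap p y - bp p y = of_real (-1 / P) + 2 / (of_nat p * (w + 1))"
  proof -
    have wn: "w + 1 \<noteq> 0" using wp1 by auto
    have pn: "(of_nat p :: complex) \<noteq> 0" using p3 by auto
    define Q where "Q = w + 1"
    have Qn: "Q \<noteq> 0" using wn by (simp add: Q_def)
    show ?thesis unfolding ap bp Q_def[symmetric] using Qn pn by (simp add: field_simps P_def)
  qed
  then have "cmod (ap p y - bp p y) \<le> cmod (of_real (-1 / P) :: complex) + cmod (2 / (of_nat p * (w + 1)))"
    by (simp only: norm_triangle_ineq)
  then have "cmod (ap p y - bp p y) \<le> 1 / P + 4 / P" using n3 t by linarith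
  then show "cmod (ap p y - bp p y) \<le> 5 / real p" by (simp add: P_def)
qed

lemma local_consts:
  assumes x: "x \<in> HP"
  shows "\<exists>d>0. \<exists>C\<ge>0. \<forall>y\<in>ball x d \<inter> HP. \<forall>p::nat. prime p \<longrightarrow>
           cmod (ap p y) + cmod (bp p y) \<le> C \<and> cmod (ap p y - bp p y) \<le> C / real p"
proof -
  have ca: "isCont (\<lambda>y. ap 2 y) x" and cb: "isCont (\<lambda>y. bp 2 y) x"
    using holomorphic_on_imp_continuous_on[OF ap_holo[of 2]] holomorphic_on_imp_continuous_on[OF bp_holo[of 2]]
      continuous_on_eq_continuous_at[OF open_HP] x by auto
  obtain d1 where d1: "d1 > 0" "\<And>y. dist y x < d1 \<Longrightarrow> dist (ap 2 y) (ap 2 x) < 1"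
    using ca unfolding continuous_at_eps_delta by (meson zero_less_one)
  obtain d2 where d2: "d2 > 0" "\<And>y. dist y x < d2 \<Longrightarrow> dist (bp 2 y) (bp 2 x) < 1"
    using cb unfolding continuous_at_eps_delta by (meson zero_less_one)
  define M where "M = cmod (ap 2 x) + cmod (bp 2 x) + 2"
  define C where "C = max 5 (2 * M)"
  have M0: "M \<ge> 0" by (simp add: M_def)
  have C0: "C \<ge> 0" by (simp add: C_def)
  have "\<forall>y\<in>ball x (min d1 d2) \<inter> HP. \<forall>p::nat. prime p \<longrightarrow>
           cmod (ap p y) + cmod (bp p y) \<le> C \<and> cmod (ap p y - bp p y) \<le> C / real p"
  proof (intro ballI allI impI)
    fix y and p :: nat assume y: "y \<in> ball x (min d1 d2) \<inter> HP" and p: "prime p"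
    have yH: "Re y > 1/2" using y by (simp add: HP_def)
    show "cmod (ap p y) + cmod (bp p y) \<le> C \<and> cmod (ap p y - bp p y) \<le> C / real p"
    proof (cases "p = 2")
      case True
      have "dist y x < d1" "dist y x < d2" using y by (auto simp: dist_commute)
      then have "dist (ap 2 y) (ap 2 x) < 1" "dist (bp 2 y) (bp 2 x) < 1" using d1 d2 by auto
      then have "cmod (ap 2 y) \<le> cmod (ap 2 x) + 1" "cmod (bp 2 y) \<le> cmod (bp 2 x) + 1"
        using norm_triangle_ineq2[of "ap 2 y" "ap 2 x"] norm_triangle_ineq2[of "bp 2 y" "bp 2 x"]
        by (auto simp: dist_norm)
      then have s: "cmod (ap 2 y) + cmod (bp 2 y) \<le> M" by (simp add: M_def)
      have "cmod (ap 2 y - bp 2 y) \<le> cmod (ap 2 y) + cmod (bp 2 y)" by (rule norm_triangle_ineq4)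
      then show ?thesis using s True by (auto simp: C_def)
    next
      case False
      note ob = odd_bounds[OF p False yH]
      have "5 / real p \<le> C / real p" by (intro divide_right_mono) (auto simp: C_def)
      then show ?thesis using ob by (auto simp: C_def)
    qed
  qed
  then show ?thesis using C0 d1(1) d2(1) by (intro exI[of _ "min d1 d2"]) auto
qed



lemma gK_summable_e:
  assumes "summable \<rho>"
  shows "summable (gK K \<rho> p)"
proof -
  have s: "summable (\<lambda>e. K / (real p)^2 * \<rho> e)" by (intro summable_mult assms)
  have ev: "\<forall>\<^sub>F e in sequentially. K / (real p)^2 * \<rho> e = gK K \<rho> p e"
    using eventually_gt_at_top[of 0] by eventually_elim (simp add: gK_def)
  from summable_cong[OF ev] s show ?thesis by simp
qed

lemma mfun_norm_le:
  fixes L :: "nat \<Rightarrow> nat \<Rightarrow> complex"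
  assumes "\<And>p. p \<in> prime_factors m \<Longrightarrow> norm (L p (multiplicity p m)) \<le> g p (multiplicity p m)"
  shows "norm (mfun L m) \<le> mfun g m"
proof -
  have "norm (mfun L m) = (\<Prod>p\<in>prime_factors m. norm (L p (multiplicity p m)))"
    unfolding mfun_def by (simp add: prod_norm)
  also have "\<dots> \<le> mfun g m" unfolding mfun_def
    by (intro prod_mono) (use assms in auto)
  finally show ?thesis .
qed

lemma dom:
  assumes x: "x \<in> HP"
  shows "\<exists>d>0. \<exists>h. summable h \<and> (\<forall>n. \<forall>y\<in>ball x d \<inter> HP. norm (dirichlet_term z y (Suc n)) \<le> h n)"
proof -
  obtain d C where d: "d > 0" and C: "C \<ge> 0" and dC: "\<forall>y\<in>ball x d \<inter> HP. \<forall>p::nat. prime p \<longrightarrow>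
           cmod (ap p y) + cmod (bp p y) \<le> C \<and> cmod (ap p y - bp p y) \<le> C / real p"
    using local_consts[OF x] by blast
  define h where "h n = mfun (gK (4 * C) (rho z)) (Suc n)" for n
  have "summable h" unfolding h_def
    by (rule gK_summable) (use C rho_nonneg rho_summable in auto)
  moreover have "norm (dirichlet_term z y (Suc n)) \<le> h n" if y: "y \<in> ball x d \<inter> HP" for n y
  proof -
    have yH: "Re y > 1/2" using y by (simp add: HP_def)
    have "dirichlet_term z y (Suc n) = mfun (Lz z y) (Suc n)" by (rule dt_mfun[OF _ yH]) simp
    also have "norm \<dots> \<le> h n" unfolding h_def
    proof (rule mfun_norm_le)
      fix p assume pp: "p \<in> prime_factors (Suc n)"
      have pr: "prime p" and e: "multiplicity p (Suc n) > 0" using pp by (auto simp: prime_factors_multiplicity)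
      show "norm (Lz z y p (multiplicity p (Suc n))) \<le> gK (4 * C) (rho z) p (multiplicity p (Suc n))"
        using Lz_bound[OF pr e C] dC y pr by auto
    qed
    finally show ?thesis .
  qed
  ultimately show ?thesis using d by blast
qed

lemma Lz_norm_summable:
  assumes s: "s \<in> HP" and p: "prime p"
  shows "summable (\<lambda>e. cmod (Lz z s p e))"
proof -
  obtain d C where d: "d > 0" and C: "C \<ge> 0" and dC: "\<forall>y\<in>ball s d \<inter> HP. \<forall>p::nat. prime p \<longrightarrow>
           cmod (ap p y) + cmod (bp p y) \<le> C \<and> cmod (ap p y - bp p y) \<le> C / real p"
    using local_consts[OF s] by blast
  have le: "cmod (Lz z s p e) \<le> gK (4 * C) (rho z) p e" for e
  proof (cases "e = 0")
    case True then show ?thesis by (simp add: Lz_def gK_def)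
  next
    case False
    then show ?thesis using Lz_bound[OF p _ C] dC s d p by auto
  qed
  show ?thesis
    by (rule summable_comparison_test[OF _ gK_summable_e[OF rho_summable]]) (use le in auto)
qed

lemma term_holo: "(\<lambda>y. dirichlet_term z y (Suc n)) holomorphic_on HP"
proof -
  have "(\<lambda>y. mfun (Lz z y) (Suc n)) holomorphic_on HP"
    unfolding mfun_def
  proof (intro holomorphic_on_prod)
    fix p assume pp: "p \<in> prime_factors (Suc n)"
    then have p2: "p \<ge> 2" by (auto simp: prime_factors_multiplicity prime_ge_2_nat)
    show "(\<lambda>y. Lz z y p (multiplicity p (Suc n))) holomorphic_on HP"
    proof (cases "multiplicity p (Suc n) = 0")
      case True then show ?thesis by (simp add: Lz_def)
    next
      case False
      have "fact (multiplicity p (Suc n)) * (of_nat p :: complex) ^ multiplicity p (Suc n) \<noteq> 0"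
        using p2 by simp
      then show ?thesis using False unfolding Lz_def
        by (simp, intro holomorphic_intros ap_holo[OF p2] bp_holo[OF p2]) auto
    qed
  qed
  then show ?thesis
    by (rule holomorphic_transform) (use dt_mfun in \<open>auto simp: HP_def\<close>)
qed

lemma main_pointwise:
  assumes s: "s \<in> HP"
  shows "(\<lambda>n. dirichlet_term z s (Suc n)) sums (\<Sum>n. dirichlet_term z s (Suc n))
         \<and> partial_euler z s \<longlonglongrightarrow> (\<Sum>n. dirichlet_term z s (Suc n))"
proof -
  have sH: "Re s > 1/2" using s by (simp add: HP_def)
  obtain d h where d: "d > 0" and h: "summable h" "\<And>n y. y \<in> ball s d \<inter> HP \<Longrightarrow> norm (dirichlet_term z y (Suc n)) \<le> h n"
    using dom[OF s, of z] by blast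
  have sn: "summable (\<lambda>n. norm (dirichlet_term z s (Suc n)))"
    by (rule summable_comparison_test[OF _ h(1)]) (use h(2)[of s] s d in auto)
  have "(\<lambda>n. dirichlet_term z s (Suc n)) sums (\<Sum>n. dirichlet_term z s (Suc n))"
    using summable_norm_cancel[OF sn] by (simp add: summable_sums)
  moreover have "partial_euler z s \<longlonglongrightarrow> (\<Sum>n. dirichlet_term z s (Suc n))"
  proof (rule tail_conv[OF sn])
    show "{1..N} \<subseteq> smooth {p. prime p \<and> p \<le> N}" for N by (rule smooth_upto)
    show "smooth {p. prime p \<and> p \<le> N} \<subseteq> {0<..}" for N by (auto simp: smooth_def)
    fix N
    have fin: "finite {p::nat. prime p \<and> p \<le> N}" by auto
    have EP: "(mfun (Lz z s) has_sum partial_euler z s N) (smooth {p. prime p \<and> p \<le> N})"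
      unfolding partial_euler_def
    proof (rule conjunct2[OF euler_product_finite[OF fin]])
      fix p assume "p \<in> {p. prime p \<and> p \<le> N}"
      then have p: "prime p" by auto
      show "prime p" by (rule p)
      show "Lz z s p 0 = 1" by (simp add: Lz_def)
      show "(Lz z s p has_sum euler_factor z s p) UNIV"
        by (rule norm_summable_imp_has_sum[OF Lz_norm_summable[OF s p] Lz_sums[OF p sH]])
      show "(\<lambda>e. norm (Lz z s p e)) summable_on UNIV"
        by (rule summable_nonneg_imp_summable_on[OF Lz_norm_summable[OF s p]]) auto
    qed
    show "(dirichlet_term z s has_sum partial_euler z s N) (smooth {p. prime p \<and> p \<le> N})"
      by (rule has_sum_cong[THEN iffD1, OF _ EP]) (use dt_mfun[OF _ sH] in \<open>auto simp: smooth_def\<close>)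
  qed
  ultimately show ?thesis ..
qed

lemma main_holo:
  "(\<lambda>s. \<Sum>n. dirichlet_term z s (Suc n)) holomorphic_on HP"
proof -
  have "\<exists>g g'. \<forall>x \<in> HP. ((\<lambda>n. dirichlet_term z x (Suc n)) sums g x) \<and>
      ((\<lambda>n. deriv (\<lambda>y. dirichlet_term z y (Suc n)) x) sums g' x) \<and> (g has_field_derivative g' x) (at x)"
  proof (rule series_and_derivative_comparison_local[OF open_HP])
    show "((\<lambda>y. dirichlet_term z y (Suc n)) has_field_derivative deriv (\<lambda>y. dirichlet_term z y (Suc n)) x) (at x)"
      if "x \<in> HP" for n x
      using holomorphic_derivI[OF term_holo open_HP that, where T=UNIV] by simp
    show "\<exists>d h. 0 < d \<and> summable h \<and> (\<forall>\<^sub>F n in sequentially. \<forall>y\<in>ball x d \<inter> HP. norm (dirichlet_term z y (Suc n)) \<le> h n)"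
      if "x \<in> HP" for x
      using dom[OF that, of z] by (auto intro: always_eventually)
  qed
  then obtain g g' where g: "\<And>x. x \<in> HP \<Longrightarrow> ((\<lambda>n. dirichlet_term z x (Suc n)) sums g x) \<and> (g has_field_derivative g' x) (at x)"
    by blast
  have "g holomorphic_on HP"
    using g by (subst holomorphic_on_open[OF open_HP]) blast
  then show ?thesis
    by (rule holomorphic_transform) (use g sums_unique in metis)
qed

lemma main_all:
  "(\<forall>s. Re s > 1/2 \<longrightarrow>
         (\<exists>L. (\<lambda>n. dirichlet_term z s (Suc n)) sums L \<and> partial_euler z s \<longlonglongrightarrow> L))
    \<and> (\<lambda>s. \<Sum>n. dirichlet_term z s (Suc n)) holomorphic_on {s. Re s > 1/2}
    \<and> (\<lambda>s. lim (partial_euler z s)) holomorphic_on {s. Re s > 1/2}"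
proof (intro conjI allI impI)
  fix s :: complex assume "Re s > 1/2"
  then show "\<exists>L. (\<lambda>n. dirichlet_term z s (Suc n)) sums L \<and> partial_euler z s \<longlonglongrightarrow> L"
    using main_pointwise[of s z] by (auto simp: HP_def)
next
  show "(\<lambda>s. \<Sum>n. dirichlet_term z s (Suc n)) holomorphic_on {s. Re s > 1/2}"
    using main_holo[of z] by (simp add: HP_def)
next
  have "(\<lambda>s. lim (partial_euler z s)) holomorphic_on HP"
  proof (rule holomorphic_transform[OF main_holo[of z]])
    fix s assume "s \<in> HP"
    then show "(\<Sum>n. dirichlet_term z s (Suc n)) = lim (partial_euler z s)"
      using main_pointwise[of s z] by (metis limI)
  qed
  then show "(\<lambda>s. lim (partial_euler z s)) holomorphic_on {s. Re s > 1/2}" by (simp add: HP_def)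
qed

theorem lemma20:
  fixes B :: real
  assumes "B > 0"
  shows "\<exists>x0::real. \<forall>x\<ge>x0. \<forall>z::complex.
    cmod z \<le> B * ln x / (ln (ln x) * ln (ln (ln x))) \<longrightarrow>
      (\<forall>s. Re s > 1/2 \<longrightarrow>
         (\<exists>L. (\<lambda>n. dirichlet_term z s (Suc n)) sums L \<and> partial_euler z s \<longlonglongrightarrow> L))
    \<and> (\<lambda>s. \<Sum>n. dirichlet_term z s (Suc n)) holomorphic_on {s. Re s > 1/2}
    \<and> (\<lambda>s. lim (partial_euler z s)) holomorphic_on {s. Re s > 1/2}"
proof (intro exI[of _ 0] allI impI)
  fix x :: real and z :: complex
  show "(\<forall>s. Re s > 1/2 \<longrightarrow>
         (\<exists>L. (\<lambda>n. dirichlet_term z s (Suc n)) sums L \<and> partial_euler z s \<longlonglongrightarrow> L))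
    \<and> (\<lambda>s. \<Sum>n. dirichlet_term z s (Suc n)) holomorphic_on {s. Re s > 1/2}
    \<and> (\<lambda>s. lim (partial_euler z s)) holomorphic_on {s. Re s > 1/2}"
    by (rule main_all)
qed

end
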